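(* Let $w/u$ be a skew partition of length $r$, $v$ a partition, and $c=(c_1,c_2'):\mathcal D(w/u)\to Y(v)$ a bijection such that (Y) for every $x\in\mathcal D(w/u)$ the set $C(x)=\{c(y): y\le_{LR}x\}$ is a Young diagram, and $c_1$ satisfies (L1) $c_1(i,j)<c_1(i',j)$ whenever $(i,j),(i',j)\in\mathcal D(w/u)$, $i<i'$, and (L2) $c_1(i,j)\le c_1(i,j')$ whenever $(i,j),(i,j')\in\mathcal D(w/u)$, $j<j'$. Then $c_1$ also satisfies (L3): for all $x\in\mathcal D(w/u)$ and $k\in\mathbb N^*$, $\sigma_k(x)\ge\sigma_{k+1}(x)$ where $\sigma_k(x)=\operatorname{card}\{y\le_{LR}x: c_1(y)=k\}$; and moreover $c_2'=c_2$, where $c_2(x)=\operatorname{card}\{y\le_{LR}x: c_1(y)=c_1(x)\}$.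
   Context: A generalized partition of length $r$ is a weakly decreasing integer sequence $u=(u_1,\dots,u_r)$, with $\mathcal D(u)=\{(i,j)\in\{1,\dots,r\}\times\mathbb Z: j\le u_i\}$; a skew partition $w/u$ means $\mathcal D(u)\subset\mathcal D(w)$, $\mathcal D(w/u)=\mathcal D(w)\setminus\mathcal D(u)$. For a partition $v$, $Y(v)=\{(i,j): i\ge1,\ 1\le j\le v_i\}$; a Young diagram is a set of the form $Y(\mu)$ for a partition $\mu$. The LR order on $\mathcal D(w/u)$ is the total order with $(i,j)<_{LR}(i',j')$ if $i<i'$, and $(i,j)<_{LR}(i,j')$ if $j>j'$. *)

theory Defs
  imports Main
begin

definition gen_partition :: "nat \<Rightarrow> (nat \<Rightarrow> int) \<Rightarrow> bool" where
  "gen_partition r u \<longleftrightarrow> (\<forall>i. 1 \<le> i \<and> i < r \<longrightarrow> u (Suc i) \<le> u i)"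

definition Dg :: "nat \<Rightarrow> (nat \<Rightarrow> int) \<Rightarrow> (nat \<times> int) set" where
  "Dg r u = {(i, j). 1 \<le> i \<and> i \<le> r \<and> j \<le> u i}"

definition skew_partition :: "nat \<Rightarrow> (nat \<Rightarrow> int) \<Rightarrow> (nat \<Rightarrow> int) \<Rightarrow> bool" where
  "skew_partition r w u \<longleftrightarrow> gen_partition r w \<and> gen_partition r u \<and> Dg r u \<subseteq> Dg r w"

definition Dskew :: "nat \<Rightarrow> (nat \<Rightarrow> int) \<Rightarrow> (nat \<Rightarrow> int) \<Rightarrow> (nat \<times> int) set" where
  "Dskew r w u = Dg r w - Dg r u"

text \<open>A partition: weakly decreasing sequence of naturals v_1 >= v_2 >= ... , finitely
  many nonzero (index 0 is ignored).\<close>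
definition partition :: "(nat \<Rightarrow> nat) \<Rightarrow> bool" where
  "partition v \<longleftrightarrow> (\<forall>i\<ge>1. v (Suc i) \<le> v i) \<and> (\<exists>N. \<forall>i\<ge>N. v i = 0)"

definition Y :: "(nat \<Rightarrow> nat) \<Rightarrow> (nat \<times> nat) set" where
  "Y v = {(i, j). 1 \<le> i \<and> 1 \<le> j \<and> j \<le> v i}"

definition young_diagram :: "(nat \<times> nat) set \<Rightarrow> bool" where
  "young_diagram S \<longleftrightarrow> (\<exists>\<mu>. partition \<mu> \<and> S = Y \<mu>)"

definition lr_less :: "nat \<times> int \<Rightarrow> nat \<times> int \<Rightarrow> bool" where
  "lr_less x y \<longleftrightarrow> fst x < fst y \<or> (fst x = fst y \<and> snd x > snd y)"

definition lr_le :: "nat \<times> int \<Rightarrow> nat \<times> int \<Rightarrow> bool" where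
  "lr_le x y \<longleftrightarrow> x = y \<or> lr_less x y"

end

theory Submission
  imports Defs
begin

lemma young_row:
  assumes "young_diagram S" "(i,j) \<in> S" "1 \<le> j'" "j' \<le> j"
  shows "(i,j') \<in> S"
  using assms unfolding young_diagram_def Y_def by auto

lemma young_col:
  assumes "young_diagram S" "(Suc i,j) \<in> S" "1 \<le> i"
  shows "(i,j) \<in> S"
proof -
  obtain \<mu> where p: "partition \<mu>" and S: "S = Y \<mu>" using assms(1) unfolding young_diagram_def by auto
  have "\<mu> (Suc i) \<le> \<mu> i" using p assms(3) unfolding partition_def by auto
  then show ?thesis using assms(2) assms(3) S unfolding Y_def by auto
qed

lemma lr_contra: "lr_le x y \<Longrightarrow> lr_less y x \<Longrightarrow> False"
  unfolding lr_le_def lr_less_def by auto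

theorem lemma4p8:
  fixes r :: nat and w u :: "nat \<Rightarrow> int" and v :: "nat \<Rightarrow> nat"
    and c :: "nat \<times> int \<Rightarrow> nat \<times> nat"
  assumes skew: "skew_partition r w u"
    and part: "partition v"
    and bij: "bij_betw c (Dskew r w u) (Y v)"
    and Ycond: "\<forall>x\<in>Dskew r w u. young_diagram {c y | y. y \<in> Dskew r w u \<and> lr_le y x}"
    and L1: "\<forall>i i' j. (i, j) \<in> Dskew r w u \<longrightarrow> (i', j) \<in> Dskew r w u \<longrightarrow> i < i'
               \<longrightarrow> fst (c (i, j)) < fst (c (i', j))"
    and L2: "\<forall>i j j'. (i, j) \<in> Dskew r w u \<longrightarrow> (i, j') \<in> Dskew r w u \<longrightarrow> j < j'
               \<longrightarrow> fst (c (i, j)) \<le> fst (c (i, j'))"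
  shows "(\<forall>x\<in>Dskew r w u. \<forall>k::nat. k \<ge> 1 \<longrightarrow>
            card {y \<in> Dskew r w u. lr_le y x \<and> fst (c y) = k}
              \<ge> card {y \<in> Dskew r w u. lr_le y x \<and> fst (c y) = k + 1})
      \<and> (\<forall>x\<in>Dskew r w u.
            snd (c x) = card {y \<in> Dskew r w u. lr_le y x \<and> fst (c y) = fst (c x)})"
proof -
  define D where "D = Dskew r w u"
  have finD: "finite D"
  proof (rule finite_subset)
    show "D \<subseteq> (SIGMA i:{1..r}. {u i<..w i})"
      unfolding D_def Dskew_def Dg_def by auto
  qed auto
  have injc: "inj_on c D" using bij unfolding D_def by (rule bij_betw_imp_inj_on)
  have cY: "\<And>y. y \<in> D \<Longrightarrow> c y \<in> Y v" using bij unfolding D_def bij_betw_def by auto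
  have ge1: "\<And>y. y \<in> D \<Longrightarrow> 1 \<le> fst (c y) \<and> 1 \<le> snd (c y)"
  proof -
    fix y assume "y \<in> D"
    then have "c y \<in> Y v" by (rule cY)
    then show "1 \<le> fst (c y) \<and> 1 \<le> snd (c y)" unfolding Y_def by (cases "c y") auto
  qed
  define C where "C x = {c y | y. y \<in> D \<and> lr_le y x}" for x
  have YC: "\<And>x. x \<in> D \<Longrightarrow> young_diagram (C x)" using Ycond unfolding C_def D_def by auto
  have img: "c ` {y \<in> D. lr_le y x \<and> fst (c y) = k} = {p \<in> C x. fst p = k}" for x k
    unfolding C_def by auto
  have finC: "finite (C x)" for x
  proof -
    have "C x = c ` {y \<in> D. lr_le y x}" unfolding C_def by auto
    then show ?thesis using finD by simp
  qed
  have cardeq: "card {y \<in> D. lr_le y x \<and> fst (c y) = k} = card {p \<in> C x. fst p = k}" for x k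
  proof -
    have "inj_on c {y \<in> D. lr_le y x \<and> fst (c y) = k}" using injc by (rule inj_on_subset) auto
    then have "card (c ` {y \<in> D. lr_le y x \<and> fst (c y) = k}) = card {y \<in> D. lr_le y x \<and> fst (c y) = k}"
      by (rule card_image)
    then show ?thesis unfolding img by simp
  qed
  have P1: "card {y \<in> D. lr_le y x \<and> fst (c y) = k + 1} \<le> card {y \<in> D. lr_le y x \<and> fst (c y) = k}"
    if x: "x \<in> D" and k: "k \<ge> 1" for x k
  proof -
    have "card {p \<in> C x. fst p = Suc k} \<le> card {p \<in> C x. fst p = k}"
    proof (rule card_inj_on_le)
      show "inj_on (\<lambda>(a,b). (a - 1, b)) {p \<in> C x. fst p = Suc k}"
        by (auto simp: inj_on_def)
      show "(\<lambda>(a,b). (a - 1, b)) ` {p \<in> C x. fst p = Suc k} \<subseteq> {p \<in> C x. fst p = k}"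
        using young_col[OF YC[OF x] _ k] by auto
      show "finite {p \<in> C x. fst p = k}" using finC by simp
    qed
    then show ?thesis using cardeq by simp
  qed
  have P2: "snd (c x) = card {y \<in> D. lr_le y x \<and> fst (c y) = fst (c x)}" if x: "x \<in> D" for x
  proof -
    define k where "k = fst (c x)"
    define m where "m = snd (c x)"
    have cx: "c x = (k, m)" unfolding k_def m_def by simp
    have m1: "1 \<le> m" using ge1[OF x] unfolding m_def by simp
    have "{p \<in> C x. fst p = k} = {k} \<times> {1..m}"
    proof
      show "{p \<in> C x. fst p = k} \<subseteq> {k} \<times> {1..m}"
      proof
        fix p assume p: "p \<in> {p \<in> C x. fst p = k}"
        then obtain y where y: "y \<in> D" "lr_le y x" "c y = p" "fst p = k" unfolding C_def by auto
        obtain j where pj: "p = (k, j)" using y(4) by (cases p) auto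
        have j1: "1 \<le> j" using ge1[OF y(1)] y(3) pj by simp
        have "j \<le> m"
        proof (rule ccontr)
          assume jm: "\<not> j \<le> m"
          then have "y \<noteq> x" using y(3) pj cx by auto
          then have yx: "lr_less y x" using y(2) unfolding lr_le_def by auto
          have "c y \<in> C y" unfolding C_def using y(1) by (metis (mono_tags, lifting) lr_le_def mem_Collect_eq)
          then have "(k, m) \<in> C y" using young_row[OF YC[OF y(1)], of k j m] y(3) pj m1 jm by auto
          then obtain z where z: "z \<in> D" "lr_le z y" "c z = (k,m)" unfolding C_def by auto
          have "z = x" using injc z x cx unfolding inj_on_def by metis
          then show False using z(2) yx lr_contra by blast
        qed
        then show "p \<in> {k} \<times> {1..m}" using pj j1 by auto
      qed
    next
      show "{k} \<times> {1..m} \<subseteq> {p \<in> C x. fst p = k}"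
      proof
        fix p assume p: "p \<in> {k} \<times> {1..m}"
        have "c x \<in> C x" unfolding C_def using x by (metis (mono_tags, lifting) lr_le_def mem_Collect_eq)
        then show "p \<in> {p \<in> C x. fst p = k}"
          using young_row[OF YC[OF x], of k m "snd p"] p cx by auto
      qed
    qed
    then show ?thesis using cardeq[of x k] unfolding k_def m_def by simp
  qed
  show ?thesis using P1 P2 unfolding D_def by auto
qed

end
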